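(* Let $f,g\colon\mathbb{R}\to\mathbb{R}$ be smooth $T$-periodic functions ($T>0$) with $\frac1T\int_0^Tg(t)\,dt=0$. Then there exists $\lambda_0$ such that for every $\lambda\geqslant\lambda_0$ with $\lambda\in\mathbb{N}$, the equation $$\ddot x=f(t)\sin x-(1+g(\lambda t))\cos x$$ has a $T$-periodic solution $x(t)$ with $x(t)\in(0,\pi)$ for all $t$.
   Context: The equation describes an inverted pendulum with a horizontally moving pivot point in a gravity field oscillating as $1+g(\lambda t)$. *)

theory Defs
  imports "HOL-Analysis.Analysis"
begin

definition smooth_real :: "(real \<Rightarrow> real) \<Rightarrow> bool" where
  "smooth_real f \<longleftrightarrow> (\<forall>n. ((deriv ^^ n) f) differentiable_on UNIV)"

definition periodic_real :: "real \<Rightarrow> (real \<Rightarrow> real) \<Rightarrow> bool" where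
  "periodic_real T f \<longleftrightarrow> (\<forall>t. f (t + T) = f t)"

end

theory Submission
  imports Defs
begin


lemma antideriv:
  fixes \<phi> :: "real \<Rightarrow> real"
  assumes "continuous_on UNIV \<phi>"
  shows "\<exists>\<Phi>. \<forall>x. (\<Phi> has_real_derivative \<phi> x) (at x)"
proof -
  have "\<exists>F. \<forall>x :: real. (-\<infinity>::ereal) < x \<longrightarrow> x < (\<infinity>::ereal) \<longrightarrow> (F has_vector_derivative \<phi> x) (at x)"
    by (rule einterval_antiderivative) (use assms in \<open>auto simp: continuous_on_eq_continuous_at\<close>)
  then show ?thesis
    by (auto simp: has_real_derivative_iff_has_vector_derivative)
qed

lemma integral_by_antideriv:
  fixes \<phi> \<Phi> :: "real \<Rightarrow> real"
  assumes "\<And>x. (\<Phi> has_real_derivative \<phi> x) (at x)" "a \<le> b"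
  shows "integral {a..b} \<phi> = \<Phi> b - \<Phi> a"
proof -
  have "(\<phi> has_integral (\<Phi> b - \<Phi> a)) {a..b}"
    apply (rule fundamental_theorem_of_calculus[OF assms(2)])
    using assms(1) by (auto simp: has_real_derivative_iff_has_vector_derivative intro: has_vector_derivative_at_within)
  then show ?thesis by (rule integral_unique)
qed

lemma deriv_const_all:
  fixes d :: "real \<Rightarrow> real"
  assumes "\<And>x. (d has_real_derivative 0) (at x)"
  shows "d x = d y"
  using DERIV_isconst_all assms by blast

lemma periodic_nat:
  assumes "periodic_real T f"
  shows "f (t + real n * T) = f t"
proof (induction n)
  case 0
  then show ?case by simp
next
  case (Suc n)
  have "t + real (Suc n) * T = (t + real n * T) + T" by (simp add: algebra_simps)
  then have "f (t + real (Suc n) * T) = f ((t + real n * T) + T)" by (rule arg_cong)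
  also have "\<dots> = f (t + real n * T)" using assms unfolding periodic_real_def by blast
  finally show ?case using Suc.IH by simp
qed

lemma periodic_int:
  assumes "periodic_real T f"
  shows "f (t + real_of_int m * T) = f t"
proof (cases "m \<ge> 0")
  case True
  define n where "n = nat m"
  have "m = int n" using True by (simp add: n_def)
  then show ?thesis using periodic_nat[OF assms, of t n] by simp
next
  case False
  define n where "n = nat (-m)"
  have n: "m = - int n" using False by (simp add: n_def)
  have "f ((t - real n * T) + real n * T) = f (t - real n * T)" by (rule periodic_nat[OF assms])
  then show ?thesis using n by simp
qed

lemma periodic_bounded:
  fixes \<phi> :: "real \<Rightarrow> real"
  assumes "T > 0" "continuous_on UNIV \<phi>" "periodic_real T \<phi>"
  shows "\<exists>B\<ge>0. \<forall>t. \<bar>\<phi> t\<bar> \<le> B"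
proof -
  have "continuous_on {0..T} \<phi>" using assms(2) continuous_on_subset by blast
  then have "compact (\<phi> ` {0..T})" by (rule compact_continuous_image) simp
  then have "bounded (\<phi> ` {0..T})" by (rule compact_imp_bounded)
  then obtain B where B: "\<forall>y\<in>\<phi> ` {0..T}. norm y \<le> B"
    unfolding bounded_iff by blast
  have "\<bar>\<phi> t\<bar> \<le> B" for t
  proof -
    define m where "m = \<lfloor>t / T\<rfloor>"
    define s where "s = t - real_of_int m * T"
    have m1: "real_of_int m \<le> t / T" "t / T < real_of_int m + 1" unfolding m_def by linarith+
    have "real_of_int m * T \<le> t" using m1(1) assms(1) by (simp add: le_divide_eq)
    moreover have "t < (real_of_int m + 1) * T" using m1(2) assms(1) by (simp add: divide_less_eq)
    ultimately have "s \<in> {0..T}" unfolding s_def by (simp add: algebra_simps)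
    moreover have "s + real_of_int m * T = t" unfolding s_def by simp
    then have "\<phi> t = \<phi> s" using periodic_int[OF assms(3), of s m] by simp
    ultimately show ?thesis using B by auto
  qed
  moreover have "norm (\<phi> 0) \<le> B" using B assms(1) by auto
  then have "B \<ge> 0" using norm_ge_zero order_trans by blast
  ultimately show ?thesis by blast
qed

lemma deriv_periodic:
  fixes \<phi> \<phi>' :: "real \<Rightarrow> real"
  assumes "\<And>t. (\<phi> has_real_derivative \<phi>' t) (at t)" "periodic_real T \<phi>"
  shows "periodic_real T \<phi>'"
  unfolding periodic_real_def
proof
  fix t
  have "((\<lambda>t. t + T) has_real_derivative 1) (at t)" by (auto intro!: derivative_eq_intros)
  from DERIV_chain2[OF assms(1) this]
  have "((\<lambda>s. \<phi> (s + T)) has_real_derivative \<phi>' (t + T) * 1) (at t)" .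
  moreover have "(\<lambda>s. \<phi> (s + T)) = \<phi>" using assms(2) by (auto simp: periodic_real_def)
  ultimately have "(\<phi> has_real_derivative \<phi>' (t + T)) (at t)" by simp
  then show "\<phi>' (t + T) = \<phi>' t" using assms(1) DERIV_unique by blast
qed

lemma smooth_cont:
  assumes "smooth_real f" shows "continuous_on UNIV f"
proof -
  have "((deriv ^^ 0) f) differentiable_on UNIV" using assms unfolding smooth_real_def by blast
  then show ?thesis by (simp add: differentiable_imp_continuous_on)
qed

lemma cont_exp_mult:
  fixes h :: "real \<Rightarrow> real"
  assumes "continuous_on UNIV h"
  shows "continuous_on UNIV (\<lambda>s. exp (cc * s) * h s)"
  by (intro continuous_intros assms)

lemma lin_aux: "(A::real) - e*B = B - e*C \<Longrightarrow> A - B = e*B - e*C"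
  by linarith

lemma I_facts:
  fixes h :: "real \<Rightarrow> real"
  assumes "continuous_on UNIV h" "periodic_real T h" "T \<ge> 0"
  shows "((\<lambda>t. integral {t..t+T} (\<lambda>s. exp (cc * s) * h s)) has_real_derivative
            (exp (cc*(t+T)) - exp (cc*t)) * h t) (at t)"
    and "integral {t+T..t+T+T} (\<lambda>s. exp (cc * s) * h s) = exp (cc*T) * integral {t..t+T} (\<lambda>s. exp (cc * s) * h s)"
proof -
  obtain \<Phi> where \<Phi>: "\<And>x. (\<Phi> has_real_derivative exp (cc*x) * h x) (at x)"
    using antideriv[OF cont_exp_mult[OF assms(1), of cc]] by blast
  have I: "integral {x..x+T} (\<lambda>s. exp (cc * s) * h s) = \<Phi> (x+T) - \<Phi> x" for x
    using integral_by_antideriv[OF \<Phi>] assms(3) by simp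
  have hp: "h (x + T) = h x" for x using assms(2) by (simp add: periodic_real_def)
  have d1: "((\<lambda>t. \<Phi> (t+T)) has_real_derivative exp (cc*(x+T)) * h (x+T)) (at x)" for x
  proof -
    have "((\<lambda>t. t + T) has_real_derivative 1) (at x)" by (auto intro!: derivative_eq_intros)
    from DERIV_chain2[OF \<Phi> this] show ?thesis by simp
  qed
  have "((\<lambda>t. \<Phi> (t+T) - \<Phi> t) has_real_derivative exp (cc*(t+T)) * h (t+T) - exp (cc*t) * h t) (at t)"
    by (rule DERIV_diff[OF d1 \<Phi>])
  then show "((\<lambda>t. integral {t..t+T} (\<lambda>s. exp (cc * s) * h s)) has_real_derivative
            (exp (cc*(t+T)) - exp (cc*t)) * h t) (at t)"
    by (simp add: I hp left_diff_distrib)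
  have Dz: "((\<lambda>t. \<Phi> (t+T) - exp (cc*T) * \<Phi> t) has_real_derivative 0) (at x)" for x
  proof -
    have "((\<lambda>t. \<Phi> (t+T) - exp (cc*T) * \<Phi> t) has_real_derivative
          exp (cc*(x+T)) * h (x+T) - exp (cc*T) * (exp (cc*x) * h x)) (at x)"
      by (rule DERIV_diff[OF d1 DERIV_cmult[OF \<Phi>]])
    moreover have "exp (cc*(x+T)) * h (x+T) - exp (cc*T) * (exp (cc*x) * h x) = 0"
    proof -
      have "exp (cc*(x+T)) = exp (cc*T) * exp (cc*x)" 
        by (simp only: distrib_left exp_add mult.commute)
      then show ?thesis by (simp add: hp)
    qed
    ultimately show ?thesis by simp
  qed
  have D: "\<Phi> ((t+T)+T) - exp (cc*T) * \<Phi> (t+T) = \<Phi> (t+T) - exp (cc*T) * \<Phi> t"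
    using deriv_const_all[OF Dz, of "t+T" t] .
  have i1: "integral {t+T..t+T+T} (\<lambda>s. exp (cc * s) * h s) = \<Phi> (t+T+T) - \<Phi> (t+T)" by (rule I)
  have i2: "integral {t..t+T} (\<lambda>s. exp (cc * s) * h s) = \<Phi> (t+T) - \<Phi> t" by (rule I)
  have "\<Phi> (t+T+T) - \<Phi> (t+T) = exp (cc*T) * (\<Phi> (t+T) - \<Phi> t)"
    using lin_aux[OF D] by (simp only: right_diff_distrib)
  then show "integral {t+T..t+T+T} (\<lambda>s. exp (cc * s) * h s) = exp (cc*T) * integral {t..t+T} (\<lambda>s. exp (cc * s) * h s)"
    by (simp only: i1 i2)
qed

definition c1 :: "real \<Rightarrow> real \<Rightarrow> real" where "c1 k T = 1 / (2*k*(1 - exp (-k*T)))"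
definition c2 :: "real \<Rightarrow> real \<Rightarrow> real" where "c2 k T = 1 / (2*k*(exp (k*T) - 1))"

definition Lop :: "real \<Rightarrow> real \<Rightarrow> (real \<Rightarrow> real) \<Rightarrow> real \<Rightarrow> real" where
  "Lop k T h t = c1 k T * exp (k*t) * integral {t..t+T} (\<lambda>s. exp ((-k) * s) * h s)
               + c2 k T * exp (-k*t) * integral {t..t+T} (\<lambda>s. exp (k * s) * h s)"

definition Lop' :: "real \<Rightarrow> real \<Rightarrow> (real \<Rightarrow> real) \<Rightarrow> real \<Rightarrow> real" where
  "Lop' k T h t = k * (c1 k T * exp (k*t) * integral {t..t+T} (\<lambda>s. exp ((-k) * s) * h s)
               - c2 k T * exp (-k*t) * integral {t..t+T} (\<lambda>s. exp (k * s) * h s))"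

lemma c_pos:
  assumes "k > 0" "T > 0"
  shows "c1 k T > 0" "c2 k T > 0"
proof -
  have "exp (-k*T) < 1" using assms by (simp add: mult_pos_pos)
  then show "c1 k T > 0" using assms by (simp add: c1_def)
  have "exp (k*T) > 1" using assms by (simp add: mult_pos_pos)
  then show "c2 k T > 0" using assms by (simp add: c2_def)
qed

lemma aux3: "(x::real) * y = z \<Longrightarrow> c * x * (y * I) = c * z * I"
  by (simp add: mult.assoc[symmetric])

lemma Lop_periodic:
  fixes h :: "real \<Rightarrow> real"
  assumes "continuous_on UNIV h" "periodic_real T h" "T \<ge> 0"
  shows "periodic_real T (Lop k T h)"
  unfolding periodic_real_def
proof
  fix t
  have a: "integral {t+T..t+T+T} (\<lambda>s. exp ((-k) * s) * h s) = exp ((-k)*T) * integral {t..t+T} (\<lambda>s. exp ((-k) * s) * h s)"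
    by (rule I_facts(2)[OF assms])
  have b: "integral {t+T..t+T+T} (\<lambda>s. exp (k * s) * h s) = exp (k*T) * integral {t..t+T} (\<lambda>s. exp (k * s) * h s)"
    by (rule I_facts(2)[OF assms])
  have e1: "exp (k*(t+T)) * exp ((-k)*T) = exp (k*t)"
  proof -
    have "k*(t+T) + (-k)*T = k*t" by (simp add: algebra_simps)
    then show ?thesis by (simp only: exp_add[symmetric])
  qed
  have e2: "exp (-k*(t+T)) * exp (k*T) = exp (-k*t)"
  proof -
    have "-k*(t+T) + k*T = -k*t" by (simp add: algebra_simps)
    then show ?thesis by (simp only: exp_add[symmetric])
  qed
  have "Lop k T h (t + T) = c1 k T * (exp (k*(t+T)) * exp ((-k)*T)) * integral {t..t+T} (\<lambda>s. exp ((-k) * s) * h s)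
     + c2 k T * (exp (-k*(t+T)) * exp (k*T)) * integral {t..t+T} (\<lambda>s. exp (k * s) * h s)"
    by (simp only: Lop_def a b mult.assoc)
  also have "\<dots> = Lop k T h t" by (simp only: e1 e2 Lop_def)
  finally show "Lop k T h (t + T) = Lop k T h t" .
qed

lemma alg1:
  fixes k E a b c1v c2v I1 I2 h :: real
  assumes k: "k > 0" and E: "E > 1" and ab: "a*b = 1"
    and c1v: "c1v = 1/(2*k*(1 - 1/E))" and c2v: "c2v = 1/(2*k*(E - 1))"
  shows "c1v * a * ((b/E - b) * h) + c1v * (a*k) * I1 + (c2v * b * ((a*E - a) * h) + c2v * (b*(-k)) * I2)
           = k * (c1v*a*I1 - c2v*b*I2)"
    and "k * (c1v*a*((b/E - b)*h) + c1v*(a*k)*I1 - (c2v*b*((a*E-a)*h) + c2v*(b*(-k))*I2))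
           = k^2 * (c1v*a*I1 + c2v*b*I2) - h"
proof -
  have Ene: "E \<noteq> 0" "1 - 1/E \<noteq> 0" "E - 1 \<noteq> 0" using E by (auto simp: field_simps)
  have "a*(b/E - b) = (a*b)/E - a*b" by (simp add: right_diff_distrib)
  also have "\<dots> = 1/E - 1" using ab by simp
  finally have "a*(b/E - b) = 1/E - 1" .
  then have "c1v * a * (b/E - b) = c1v * (1/E - 1)" by (simp add: mult.assoc)
  also have "\<dots> = -1/(2*k)" unfolding c1v using Ene k by (simp add: field_simps)
  finally have h1: "c1v * a * (b/E - b) = -1/(2*k)" .
  have "b*(a*E - a) = (a*b)*E - a*b" by (simp add: algebra_simps)
  also have "\<dots> = E - 1" using ab by simp
  finally have "b*(a*E - a) = E - 1" .
  then have "c2v * b * (a*E - a) = c2v * (E - 1)" by (simp add: mult.assoc)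
  also have "\<dots> = 1/(2*k)" unfolding c2v using Ene k by (simp add: field_simps)
  finally have h2: "c2v * b * (a*E - a) = 1/(2*k)" .
  have "c1v * a * ((b/E - b) * h) = (c1v * a * (b/E - b)) * h" by (simp only: mult.assoc)
  then have X1: "c1v * a * ((b/E - b) * h) = -h/(2*k)" unfolding h1 by simp
  have "c2v * b * ((a*E - a) * h) = (c2v * b * (a*E - a)) * h" by (simp only: mult.assoc)
  then have X2: "c2v * b * ((a*E - a) * h) = h/(2*k)" unfolding h2 by simp
  show "c1v * a * ((b/E - b) * h) + c1v * (a*k) * I1 + (c2v * b * ((a*E - a) * h) + c2v * (b*(-k)) * I2)
           = k * (c1v*a*I1 - c2v*b*I2)"
    unfolding X1 X2 by (simp add: algebra_simps)
  show "k * (c1v*a*((b/E - b)*h) + c1v*(a*k)*I1 - (c2v*b*((a*E-a)*h) + c2v*(b*(-k))*I2))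
           = k^2 * (c1v*a*I1 + c2v*b*I2) - h"
    unfolding X1 X2 using k by (simp add: algebra_simps power2_eq_square)
qed

lemma Lop_deriv:
  fixes h :: "real \<Rightarrow> real"
  assumes k: "k > 0" and T: "T > 0" and hc: "continuous_on UNIV h" and hp: "periodic_real T h"
  shows "(Lop k T h has_real_derivative Lop' k T h t) (at t)"
    and "(Lop' k T h has_real_derivative k^2 * Lop k T h t - h t) (at t)"
proof -
  define I1 where "I1 = (\<lambda>t. integral {t..t+T} (\<lambda>s. exp ((-k) * s) * h s))"
  define I2 where "I2 = (\<lambda>t. integral {t..t+T} (\<lambda>s. exp (k * s) * h s))"
  have d1: "(I1 has_real_derivative (exp ((-k)*(t+T)) - exp ((-k)*t)) * h t) (at t)"
    unfolding I1_def by (rule I_facts(1)[OF hc hp]) (use T in simp)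
  have d2: "(I2 has_real_derivative (exp (k*(t+T)) - exp (k*t)) * h t) (at t)"
    unfolding I2_def by (rule I_facts(1)[OF hc hp]) (use T in simp)
  have ea: "((\<lambda>t. exp (k*t)) has_real_derivative exp (k*t) * k) (at t)"
    by (auto intro!: derivative_eq_intros)
  have eb: "((\<lambda>t. exp ((-k)*t)) has_real_derivative exp ((-k)*t) * (-k)) (at t)"
    by (auto intro!: derivative_eq_intros)
  have L: "Lop k T h = (\<lambda>t. c1 k T * exp (k*t) * I1 t + c2 k T * exp ((-k)*t) * I2 t)"
    by (simp add: fun_eq_iff Lop_def I1_def I2_def)
  have L': "Lop' k T h = (\<lambda>t. k * (c1 k T * exp (k*t) * I1 t - c2 k T * exp ((-k)*t) * I2 t))"
    by (simp add: fun_eq_iff Lop'_def I1_def I2_def)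
  define a where "a = exp (k*t)"
  define b where "b = exp ((-k)*t)"
  define E where "E = exp (k*T)"
  have ab: "a * b = 1" unfolding a_def b_def by (simp add: exp_add[symmetric])
  have E1: "E > 1" unfolding E_def using k T by simp
  have x1: "exp ((-k)*(t+T)) = b / E"
  proof -
    have "exp ((-k)*(t+T)) * E = b" unfolding E_def b_def by (simp add: exp_add[symmetric] algebra_simps)
    then show ?thesis using E1 by (simp add: field_simps)
  qed
  have x2: "exp (k*(t+T)) = a * E" unfolding a_def E_def by (simp add: exp_add[symmetric] algebra_simps)
  have c1e: "c1 k T = 1/(2*k*(1 - 1/E))" unfolding c1_def E_def by (simp add: exp_minus')
  have c2e: "c2 k T = 1/(2*k*(E - 1))" unfolding c2_def E_def by simp
  have D1: "((\<lambda>t. c1 k T * exp (k*t) * I1 t + c2 k T * exp ((-k)*t) * I2 t) has_real_derivative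
      c1 k T * exp (k*t) * ((exp ((-k)*(t+T)) - exp ((-k)*t)) * h t) + c1 k T * (exp (k*t) * k) * I1 t
      + (c2 k T * exp ((-k)*t) * ((exp (k*(t+T)) - exp (k*t)) * h t) + c2 k T * (exp ((-k)*t) * (-k)) * I2 t)) (at t)"
    by (rule DERIV_add DERIV_mult' DERIV_cmult ea eb d1 d2)+
  show "(Lop k T h has_real_derivative Lop' k T h t) (at t)"
    using D1 unfolding L L' x1 x2 a_def[symmetric] b_def[symmetric] alg1(1)[OF k E1 ab c1e c2e] .
  have D2: "((\<lambda>t. k * (c1 k T * exp (k*t) * I1 t - c2 k T * exp ((-k)*t) * I2 t)) has_real_derivative
      k * (c1 k T * exp (k*t) * ((exp ((-k)*(t+T)) - exp ((-k)*t)) * h t) + c1 k T * (exp (k*t) * k) * I1 t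
      - (c2 k T * exp ((-k)*t) * ((exp (k*(t+T)) - exp (k*t)) * h t) + c2 k T * (exp ((-k)*t) * (-k)) * I2 t))) (at t)"
    by (rule DERIV_cmult DERIV_diff DERIV_mult' ea eb d1 d2)+
  have LL: "Lop k T h t = c1 k T * a * I1 t + c2 k T * b * I2 t" unfolding L a_def b_def by simp
  show "(Lop' k T h has_real_derivative k^2 * Lop k T h t - h t) (at t)"
    using D2 unfolding L' LL x1 x2 a_def[symmetric] b_def[symmetric] alg1(2)[OF k E1 ab c1e c2e] .
qed

lemma int_exp_h:
  fixes h :: "real \<Rightarrow> real"
  assumes "continuous_on UNIV h"
  shows "(\<lambda>s. exp (cc * s) * h s) integrable_on {a..b}"
  by (rule integrable_continuous_interval) (use cont_exp_mult[OF assms] continuous_on_subset in blast)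

lemma Lop_mono:
  fixes h1 h2 :: "real \<Rightarrow> real"
  assumes k: "k > 0" and T: "T > 0" and c1: "continuous_on UNIV h1" and c2: "continuous_on UNIV h2"
    and le: "\<And>s. h1 s \<le> h2 s"
  shows "Lop k T h1 t \<le> Lop k T h2 t"
proof -
  have i1: "integral {t..t+T} (\<lambda>s. exp ((-k) * s) * h1 s) \<le> integral {t..t+T} (\<lambda>s. exp ((-k) * s) * h2 s)"
    by (rule integral_le[OF int_exp_h[OF c1] int_exp_h[OF c2]]) (simp add: le)
  have i2: "integral {t..t+T} (\<lambda>s. exp (k * s) * h1 s) \<le> integral {t..t+T} (\<lambda>s. exp (k * s) * h2 s)"
    by (rule integral_le[OF int_exp_h[OF c1] int_exp_h[OF c2]]) (simp add: le)
  have p1: "c1 k T * exp (k*t) \<ge> 0" using c_pos[OF k T] by simp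
  have p2: "c2 k T * exp (-k*t) \<ge> 0" using c_pos[OF k T] by simp
  show ?thesis unfolding Lop_def
    by (rule add_mono[OF mult_left_mono[OF i1 p1] mult_left_mono[OF i2 p2]])
qed

lemma Lop_unique:
  fixes h v v' v2 :: "real \<Rightarrow> real"
  assumes k: "k > 0" and T: "T > 0" and hc: "continuous_on UNIV h" and hp: "periodic_real T h"
    and dv: "\<And>t. (v has_real_derivative v' t) (at t)"
    and dv': "\<And>t. (v' has_real_derivative v2 t) (at t)"
    and vp: "periodic_real T v"
    and eq: "\<And>t. v2 t = k^2 * v t - h t"
  shows "v t = Lop k T h t"
proof -
  define d where "d = (\<lambda>t. v t - Lop k T h t)"
  define d' where "d' = (\<lambda>t. v' t - Lop' k T h t)"
  have dd: "(d has_real_derivative d' x) (at x)" for x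
    unfolding d_def d'_def by (rule DERIV_diff[OF dv Lop_deriv(1)[OF k T hc hp]])
  have dd': "(d' has_real_derivative k^2 * d x) (at x)" for x
  proof -
    have "(d' has_real_derivative v2 x - (k^2 * Lop k T h x - h x)) (at x)"
      unfolding d'_def by (rule DERIV_diff[OF dv' Lop_deriv(2)[OF k T hc hp]])
    moreover have "v2 x - (k^2 * Lop k T h x - h x) = k^2 * d x"
      unfolding eq d_def by (simp add: algebra_simps)
    ultimately show ?thesis by simp
  qed
  have dp: "periodic_real T d"
    using vp Lop_periodic[OF hc hp] T unfolding periodic_real_def d_def by simp
  have dp': "periodic_real T d'" by (rule deriv_periodic[OF dd dp])
  define w where "w = (\<lambda>t. d' t - k * d t)"
  have wp: "w (x + T) = w x" for x using dp dp' unfolding periodic_real_def w_def by simp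
  have dw: "(w has_real_derivative (-k) * w x) (at x)" for x
  proof -
    have "(w has_real_derivative k^2 * d x - k * d' x) (at x)"
      unfolding w_def by (rule DERIV_diff[OF dd' DERIV_cmult[OF dd]])
    moreover have "k^2 * d x - k * d' x = (-k) * w x" unfolding w_def by (simp add: algebra_simps power2_eq_square)
    ultimately show ?thesis by simp
  qed
  define p where "p = (\<lambda>t. w t * exp (k * t))"
  have dpz: "(p has_real_derivative 0) (at x)" for x
  proof -
    have e: "((\<lambda>t. exp (k*t)) has_real_derivative exp (k*x) * k) (at x)"
      by (auto intro!: derivative_eq_intros)
    have "(p has_real_derivative w x * (exp (k*x) * k) + (-k) * w x * exp (k * x)) (at x)"
      unfolding p_def by (rule DERIV_mult'[OF dw e])
    then show ?thesis by (simp add: algebra_simps)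
  qed
  have "p T = p 0" using deriv_const_all[OF dpz] by blast
  then have "w 0 * exp (k*T) = w 0" unfolding p_def using wp[of 0] by simp
  moreover have "exp (k*T) \<noteq> 1" using k T by simp
  ultimately have w0: "w 0 = 0" by (metis mult_cancel_left1)
  have wz: "w x = 0" for x
  proof -
    have "p x = p 0" using deriv_const_all[OF dpz] by blast
    then have "w x * exp (k*x) = 0" unfolding p_def using w0 by simp
    then show ?thesis by simp
  qed
  define q where "q = (\<lambda>t. d t * exp ((-k) * t))"
  have dqz: "(q has_real_derivative 0) (at x)" for x
  proof -
    have e: "((\<lambda>t. exp ((-k)*t)) has_real_derivative exp ((-k)*x) * (-k)) (at x)"
      by (auto intro!: derivative_eq_intros)
    have "(q has_real_derivative d x * (exp ((-k)*x) * (-k)) + d' x * exp ((-k) * x)) (at x)"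
      unfolding q_def by (rule DERIV_mult'[OF dd e])
    moreover have "d' x = k * d x" using wz[of x] unfolding w_def by simp
    ultimately show ?thesis by (simp add: algebra_simps)
  qed
  have "q T = q 0" using deriv_const_all[OF dqz] by blast
  then have "d 0 * exp ((-k)*T) = d 0" unfolding q_def using dp unfolding periodic_real_def
    by (metis add_0 mult_zero_right exp_zero mult_1_right)
  moreover have "exp ((-k)*T) \<noteq> 1" using k T by simp
  ultimately have d0: "d 0 = 0" by (metis mult_cancel_left1)
  have "q t = q 0" using deriv_const_all[OF dqz] by blast
  then have "d t * exp ((-k)*t) = 0" unfolding q_def using d0 by simp
  then have "d t = 0" by simp
  then show ?thesis unfolding d_def by simp
qed

lemma Lop_const:
  assumes k: "k > 0" and T: "T > 0"
  shows "Lop k T (\<lambda>_. H) t = H / k^2"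
proof -
  have "(\<lambda>_. H / k^2) t = Lop k T (\<lambda>_. H) t"
    by (rule Lop_unique[OF k T, where v' = "\<lambda>_. 0" and ?v2.0 = "\<lambda>_. 0"])
       (use k in \<open>auto simp: periodic_real_def\<close>)
  then show ?thesis by simp
qed

lemma Lop'_bound:
  fixes h :: "real \<Rightarrow> real"
  assumes k: "k > 0" and T: "T > 0" and hc: "continuous_on UNIV h"
    and hb: "\<And>s. \<bar>h s\<bar> \<le> H"
  shows "\<bar>Lop' k T h t\<bar> \<le> H / k"
proof -
  have Hc: "continuous_on UNIV (\<lambda>_::real. H)" by simp
  define a where "a = c1 k T * exp (k*t)"
  define b where "b = c2 k T * exp (-k*t)"
  have a0: "a \<ge> 0" "b \<ge> 0" unfolding a_def b_def using c_pos[OF k T] by auto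
  have j1: "\<bar>integral {t..t+T} (\<lambda>s. exp ((-k) * s) * h s)\<bar> \<le> integral {t..t+T} (\<lambda>s. exp ((-k) * s) * H)"
  proof -
    have "norm (integral {t..t+T} (\<lambda>s. exp ((-k) * s) * h s)) \<le> integral {t..t+T} (\<lambda>s. exp ((-k) * s) * H)"
      by (rule integral_norm_bound_integral[OF int_exp_h[OF hc] int_exp_h[OF Hc]]) (simp add: abs_mult hb mult_left_mono)
    then show ?thesis by simp
  qed
  have j2: "\<bar>integral {t..t+T} (\<lambda>s. exp (k * s) * h s)\<bar> \<le> integral {t..t+T} (\<lambda>s. exp (k * s) * H)"
  proof -
    have "norm (integral {t..t+T} (\<lambda>s. exp (k * s) * h s)) \<le> integral {t..t+T} (\<lambda>s. exp (k * s) * H)"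
      by (rule integral_norm_bound_integral[OF int_exp_h[OF hc] int_exp_h[OF Hc]]) (simp add: abs_mult hb mult_left_mono)
    then show ?thesis by simp
  qed
  have "\<bar>Lop' k T h t\<bar> = k * \<bar>a * integral {t..t+T} (\<lambda>s. exp ((-k) * s) * h s) - b * integral {t..t+T} (\<lambda>s. exp (k * s) * h s)\<bar>"
    unfolding Lop'_def a_def b_def using k by (simp add: abs_mult)
  also have "\<dots> \<le> k * (a * integral {t..t+T} (\<lambda>s. exp ((-k) * s) * H) + b * integral {t..t+T} (\<lambda>s. exp (k * s) * H))"
  proof -
    have "\<bar>a * integral {t..t+T} (\<lambda>s. exp ((-k) * s) * h s) - b * integral {t..t+T} (\<lambda>s. exp (k * s) * h s)\<bar>
        \<le> a * \<bar>integral {t..t+T} (\<lambda>s. exp ((-k) * s) * h s)\<bar> + b * \<bar>integral {t..t+T} (\<lambda>s. exp (k * s) * h s)\<bar>"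
      using a0 by (simp add: abs_mult abs_triangle_ineq4 order_trans[OF abs_triangle_ineq4])
    also have "\<dots> \<le> a * integral {t..t+T} (\<lambda>s. exp ((-k) * s) * H) + b * integral {t..t+T} (\<lambda>s. exp (k * s) * H)"
      by (rule add_mono[OF mult_left_mono[OF j1 a0(1)] mult_left_mono[OF j2 a0(2)]])
    finally show ?thesis using k by simp
  qed
  also have "\<dots> = k * Lop k T (\<lambda>_. H) t" unfolding Lop_def a_def b_def by simp
  also have "\<dots> = H / k" unfolding Lop_const[OF k T] using k by (simp add: power2_eq_square)
  finally show ?thesis .
qed

lemma deriv_cont:
  fixes \<phi> \<phi>' :: "real \<Rightarrow> real"
  assumes "\<And>t. (\<phi> has_real_derivative \<phi>' t) (at t)"
  shows "continuous_on UNIV \<phi>"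
  unfolding continuous_on_eq_continuous_at[OF open_UNIV] using DERIV_isCont[OF assms] by blast

lemma sin_lip: "\<bar>sin y - sin z\<bar> \<le> \<bar>y - z\<bar>" for y z :: real
proof -
  have "norm (sin y - sin z) \<le> 1 * norm (y - z)"
    by (rule field_differentiable_bound[of UNIV sin cos]) (auto intro: DERIV_sin abs_cos_le_one)
  then show ?thesis by simp
qed

lemma cos_lip: "\<bar>cos y - cos z\<bar> \<le> \<bar>y - z\<bar>" for y z :: real
proof -
  have "norm (cos y - cos z) \<le> 1 * norm (y - z)"
    by (rule field_differentiable_bound[of UNIV cos "\<lambda>x. - sin x"]) (auto intro: DERIV_cos abs_sin_le_one)
  then show ?thesis by simp
qed

lemma UL:
  fixes f q \<alpha> \<alpha>' \<alpha>2 \<beta> \<beta>' \<beta>2 :: "real \<Rightarrow> real"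
  assumes T: "T > 0" and fc: "continuous_on UNIV f" and qc: "continuous_on UNIV q"
    and fp: "periodic_real T f" and qp: "periodic_real T q"
    and da: "\<And>t. (\<alpha> has_real_derivative \<alpha>' t) (at t)"
    and da': "\<And>t. (\<alpha>' has_real_derivative \<alpha>2 t) (at t)"
    and db: "\<And>t. (\<beta> has_real_derivative \<beta>' t) (at t)"
    and db': "\<And>t. (\<beta>' has_real_derivative \<beta>2 t) (at t)"
    and a2c: "continuous_on UNIV \<alpha>2" and b2c: "continuous_on UNIV \<beta>2"
    and ap: "periodic_real T \<alpha>" and bp: "periodic_real T \<beta>"
    and lower: "\<And>t. \<alpha>2 t \<ge> f t * sin (\<alpha> t) - (1 + q t) * cos (\<alpha> t)"
    and upper: "\<And>t. \<beta>2 t \<le> f t * sin (\<beta> t) - (1 + q t) * cos (\<beta> t)"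
    and ab: "\<And>t. \<alpha> t \<le> \<beta> t"
  shows "\<exists>x x'. (\<forall>t. (x has_real_derivative x' t) (at t)) \<and>
           (\<forall>t. (x' has_real_derivative f t * sin (x t) - (1 + q t) * cos (x t)) (at t)) \<and>
           periodic_real T x \<and> (\<forall>t. \<alpha> t \<le> x t \<and> x t \<le> \<beta> t)"
proof -
  obtain Cf where Cf: "Cf \<ge> 0" "\<And>t. \<bar>f t\<bar> \<le> Cf" using periodic_bounded[OF T fc fp] by blast
  obtain Cq where Cq: "Cq \<ge> 0" "\<And>t. \<bar>q t\<bar> \<le> Cq" using periodic_bounded[OF T qc qp] by blast
  have ac: "continuous_on UNIV \<alpha>" by (rule deriv_cont[OF da])
  have bc: "continuous_on UNIV \<beta>" by (rule deriv_cont[OF db])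
  obtain Aa where Aa: "\<And>t. \<bar>\<alpha> t\<bar> \<le> Aa" using periodic_bounded[OF T ac ap] by blast
  obtain Ab where Ab: "\<And>t. \<bar>\<beta> t\<bar> \<le> Ab" using periodic_bounded[OF T bc bp] by blast
  define A where "A = max Aa Ab"
  define M where "M = Cf + 1 + Cq"
  have M1: "M \<ge> 1" unfolding M_def using Cf Cq by simp
  define k where "k = sqrt M"
  have k: "k > 0" unfolding k_def using M1 by simp
  have kM: "k^2 = M" unfolding k_def using M1 by simp
  define F where "F = (\<lambda>t y. f t * sin y - (1 + q t) * cos y)"
  have Flip: "\<bar>F t y - F t z\<bar> \<le> M * \<bar>y - z\<bar>" for t y z
  proof -
    have "F t y - F t z = f t * (sin y - sin z) - (1 + q t) * (cos y - cos z)"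
      unfolding F_def by (simp add: algebra_simps)
    also have "\<bar>\<dots>\<bar> \<le> \<bar>f t\<bar> * \<bar>sin y - sin z\<bar> + \<bar>1 + q t\<bar> * \<bar>cos y - cos z\<bar>"
      by (simp add: abs_mult[symmetric] abs_triangle_ineq4)
    also have "\<dots> \<le> Cf * \<bar>y - z\<bar> + (1 + Cq) * \<bar>y - z\<bar>"
    proof (rule add_mono)
      show "\<bar>f t\<bar> * \<bar>sin y - sin z\<bar> \<le> Cf * \<bar>y - z\<bar>"
        by (rule mult_mono[OF Cf(2) sin_lip]) (use Cf in auto)
      have "\<bar>1 + q t\<bar> \<le> 1 + Cq" using Cq(2)[of t] by linarith
      then show "\<bar>1 + q t\<bar> * \<bar>cos y - cos z\<bar> \<le> (1 + Cq) * \<bar>y - z\<bar>"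
        by (rule mult_mono[OF _ cos_lip]) (use Cq in auto)
    qed
    also have "\<dots> = M * \<bar>y - z\<bar>" unfolding M_def by (simp add: algebra_simps)
    finally show ?thesis .
  qed
  have Fb: "\<bar>F t y\<bar> \<le> M" for t y
  proof -
    have "\<bar>F t y\<bar> \<le> \<bar>f t\<bar> * \<bar>sin y\<bar> + \<bar>1 + q t\<bar> * \<bar>cos y\<bar>"
      unfolding F_def by (simp add: abs_mult[symmetric] abs_triangle_ineq4)
    also have "\<dots> \<le> Cf * 1 + (1 + Cq) * 1"
    proof (rule add_mono)
      show "\<bar>f t\<bar> * \<bar>sin y\<bar> \<le> Cf * 1" by (rule mult_mono[OF Cf(2) abs_sin_le_one]) (use Cf in auto)
      have "\<bar>1 + q t\<bar> \<le> 1 + Cq" using Cq(2)[of t] by linarith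
      then show "\<bar>1 + q t\<bar> * \<bar>cos y\<bar> \<le> (1 + Cq) * 1"
        by (rule mult_mono[OF _ abs_cos_le_one]) (use Cq in auto)
    qed
    finally show ?thesis unfolding M_def by simp
  qed
  define \<Psi> where "\<Psi> = (\<lambda>x t. M * x t - F t (x t))"
  have \<Psi>mono: "\<Psi> x t \<le> \<Psi> y t" if "x t \<le> y t" for x y t
  proof -
    have "F t (y t) - F t (x t) \<le> M * \<bar>y t - x t\<bar>" using Flip[of t "y t" "x t"] by linarith
    then show ?thesis unfolding \<Psi>_def using that by (simp add: algebra_simps)
  qed
  have \<Psi>cont: "continuous_on UNIV (\<Psi> x)" if "continuous_on UNIV x" for x
    unfolding \<Psi>_def F_def by (intro continuous_intros that fc qc)
  have \<Psi>per: "periodic_real T (\<Psi> x)" if "periodic_real T x" for x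
    using that fp qp unfolding \<Psi>_def F_def periodic_real_def by simp
  define \<Phi> where "\<Phi> = (\<lambda>x. Lop k T (\<Psi> x))"
  have \<Phi>cont: "continuous_on UNIV (\<Phi> x)" if "continuous_on UNIV x" "periodic_real T x" for x
    unfolding \<Phi>_def by (rule deriv_cont[OF Lop_deriv(1)[OF k T \<Psi>cont[OF that(1)] \<Psi>per[OF that(2)]]])
  have \<Phi>per: "periodic_real T (\<Phi> x)" if "continuous_on UNIV x" "periodic_real T x" for x
    unfolding \<Phi>_def by (rule Lop_periodic[OF \<Psi>cont[OF that(1)] \<Psi>per[OF that(2)]]) (use T in simp)
  have \<Phi>mono: "\<Phi> x t \<le> \<Phi> y t" if "continuous_on UNIV x" "continuous_on UNIV y" "\<And>s. x s \<le> y s" for x y t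
    unfolding \<Phi>_def by (rule Lop_mono[OF k T \<Psi>cont[OF that(1)] \<Psi>cont[OF that(2)]], rule \<Psi>mono, rule that(3))
  have a2p: "periodic_real T \<alpha>2" by (rule deriv_periodic[OF da' deriv_periodic[OF da ap]])
  have b2p: "periodic_real T \<beta>2" by (rule deriv_periodic[OF db' deriv_periodic[OF db bp]])
  have \<alpha>low: "\<alpha> t \<le> \<Phi> \<alpha> t" for t
  proof -
    have hc: "continuous_on UNIV (\<lambda>t. M * \<alpha> t - \<alpha>2 t)" by (intro continuous_intros ac a2c)
    have hp: "periodic_real T (\<lambda>t. M * \<alpha> t - \<alpha>2 t)" using ap a2p unfolding periodic_real_def by simp
    have "\<alpha> t = Lop k T (\<lambda>t. M * \<alpha> t - \<alpha>2 t) t"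
      by (rule Lop_unique[OF k T hc hp da da' ap]) (simp add: kM)
    also have "\<dots> \<le> \<Phi> \<alpha> t" unfolding \<Phi>_def
      apply (rule Lop_mono[OF k T hc \<Psi>cont[OF ac]])
      subgoal for s using lower[of s] unfolding \<Psi>_def F_def by linarith
      done
    finally show ?thesis .
  qed
  have \<beta>up: "\<Phi> \<beta> t \<le> \<beta> t" for t
  proof -
    have hc: "continuous_on UNIV (\<lambda>t. M * \<beta> t - \<beta>2 t)" by (intro continuous_intros bc b2c)
    have hp: "periodic_real T (\<lambda>t. M * \<beta> t - \<beta>2 t)" using bp b2p unfolding periodic_real_def by simp
    have "\<Phi> \<beta> t \<le> Lop k T (\<lambda>t. M * \<beta> t - \<beta>2 t) t" unfolding \<Phi>_def
      apply (rule Lop_mono[OF k T \<Psi>cont[OF bc] hc])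
      subgoal for s using upper[of s] unfolding \<Psi>_def F_def by linarith
      done
    also have "\<dots> = \<beta> t"
      by (rule Lop_unique[OF k T hc hp db db' bp, symmetric]) (simp add: kM)
    finally show ?thesis .
  qed
  define xs where "xs = (\<lambda>n. (\<Phi> ^^ n) \<alpha>)"
  have xs0: "xs 0 = \<alpha>" by (simp add: xs_def)
  have xsS: "xs (Suc n) = \<Phi> (xs n)" for n by (simp add: xs_def)
  have inv: "continuous_on UNIV (xs n) \<and> periodic_real T (xs n) \<and>
      (\<forall>t. \<alpha> t \<le> xs n t \<and> xs n t \<le> \<beta> t \<and> xs n t \<le> xs (Suc n) t)" for n
  proof (induction n)
    case 0
    show ?case using ac ap ab \<alpha>low by (simp add: xs0 xsS)
  next
    case (Suc n)
    then have c: "continuous_on UNIV (xs n)" and p: "periodic_real T (xs n)"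
      and b1: "\<And>t. \<alpha> t \<le> xs n t" and b2: "\<And>t. xs n t \<le> \<beta> t" and b3: "\<And>t. xs n t \<le> xs (Suc n) t"
      by auto
    have c': "continuous_on UNIV (xs (Suc n))" unfolding xsS by (rule \<Phi>cont[OF c p])
    have p': "periodic_real T (xs (Suc n))" unfolding xsS by (rule \<Phi>per[OF c p])
    have u: "xs (Suc n) t \<le> \<beta> t" for t
    proof -
      have "\<Phi> (xs n) t \<le> \<Phi> \<beta> t" by (rule \<Phi>mono[OF c bc b2])
      also have "\<dots> \<le> \<beta> t" by (rule \<beta>up)
      finally show ?thesis by (simp only: xsS)
    qed
    have m: "xs (Suc n) t \<le> xs (Suc (Suc n)) t" for t
    proof -
      have "\<Phi> (xs n) t \<le> \<Phi> (xs (Suc n)) t" by (rule \<Phi>mono[OF c c' b3])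
      then show ?thesis by (simp only: xsS)
    qed
    have l: "\<alpha> t \<le> xs (Suc n) t" for t using b1[of t] b3[of t] by linarith
    show ?case using c' p' u m l by blast
  qed
  have xc: "continuous_on UNIV (xs n)" for n using inv by blast
  have xp: "periodic_real T (xs n)" for n using inv by blast
  have xl: "\<alpha> t \<le> xs n t" and xu: "xs n t \<le> \<beta> t" and xm: "xs n t \<le> xs (Suc n) t" for n t
    using inv by blast+
  have AaA: "Aa \<le> A" and AbA: "Ab \<le> A" unfolding A_def by auto
  have xsA: "\<bar>xs n s\<bar> \<le> A" for n s
    using xl[of s n] xu[of n s] Aa[of s] Ab[of s] AaA AbA by linarith
  define Hb where "Hb = M * A + M"
  have \<Psi>B: "\<bar>\<Psi> (xs n) s\<bar> \<le> Hb" for n s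
  proof -
    have "\<bar>\<Psi> (xs n) s\<bar> \<le> M * \<bar>xs n s\<bar> + \<bar>F s (xs n s)\<bar>"
      unfolding \<Psi>_def using abs_triangle_ineq4[of "M * xs n s" "F s (xs n s)"] M1 by (simp add: abs_mult)
    also have "\<dots> \<le> M * A + M" by (rule add_mono[OF mult_left_mono[OF xsA] Fb]) (use M1 in simp)
    finally show ?thesis unfolding Hb_def .
  qed
  have Hb0: "Hb \<ge> 0" using \<Psi>B[of 0 0] by linarith
  have lipn: "\<bar>xs (Suc n) t - xs (Suc n) s\<bar> \<le> (Hb / k) * \<bar>t - s\<bar>" for n t s
  proof -
    have "norm (Lop k T (\<Psi> (xs n)) t - Lop k T (\<Psi> (xs n)) s) \<le> (Hb / k) * norm (t - s)"
    proof (rule field_differentiable_bound[of UNIV _ "Lop' k T (\<Psi> (xs n))"])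
      show "\<And>z. z \<in> UNIV \<Longrightarrow> (Lop k T (\<Psi> (xs n)) has_field_derivative Lop' k T (\<Psi> (xs n)) z) (at z within UNIV)"
        using Lop_deriv(1)[OF k T \<Psi>cont[OF xc] \<Psi>per[OF xp]] by simp
      show "\<And>z. z \<in> UNIV \<Longrightarrow> norm (Lop' k T (\<Psi> (xs n)) z) \<le> Hb / k"
        using Lop'_bound[OF k T \<Psi>cont[OF xc] \<Psi>B] by simp
    qed auto
    then show ?thesis unfolding xsS \<Phi>_def by simp
  qed
  define x where "x = (\<lambda>t. SUP n. xs n t)"
  have conv: "(\<lambda>n. xs n t) \<longlonglongrightarrow> x t" for t
    unfolding x_def
  proof (rule LIMSEQ_incseq_SUP)
    show "bdd_above (range (\<lambda>n. xs n t))" by (rule bdd_aboveI[of _ "\<beta> t"]) (use xu in auto)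
    show "incseq (\<lambda>n. xs n t)" by (rule incseq_SucI) (rule xm)
  qed
  have x_l: "\<alpha> t \<le> x t" for t by (rule LIMSEQ_le_const[OF conv]) (use xl in auto)
  have x_u: "x t \<le> \<beta> t" for t by (rule LIMSEQ_le_const2[OF conv]) (use xu in auto)
  have x_per: "periodic_real T x" unfolding periodic_real_def x_def using xp by (simp add: periodic_real_def)
  have x_lip: "\<bar>x t - x s\<bar> \<le> (Hb / k) * \<bar>t - s\<bar>" for t s
  proof (rule LIMSEQ_le_const2)
    show "(\<lambda>n. \<bar>xs (Suc n) t - xs (Suc n) s\<bar>) \<longlonglongrightarrow> \<bar>x t - x s\<bar>"
      by (intro tendsto_intros LIMSEQ_Suc[OF conv])
  qed (use lipn in auto)
  have x_cont: "continuous_on UNIV x"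
  proof (rule lipschitz_on_continuous_on)
    show "(Hb / k)-lipschitz_on UNIV x"
      by (rule lipschitz_onI) (use x_lip k Hb0 in \<open>auto simp: dist_real_def\<close>)
  qed
  have hc: "continuous_on UNIV (\<Psi> x)" by (rule \<Psi>cont[OF x_cont])
  have hp: "periodic_real T (\<Psi> x)" by (rule \<Psi>per[OF x_per])
  have intconv: "(\<lambda>n. integral {t..t+T} (\<lambda>s. exp (cc * s) * \<Psi> (xs n) s))
      \<longlonglongrightarrow> integral {t..t+T} (\<lambda>s. exp (cc * s) * \<Psi> x s)" for cc t
  proof (rule dominated_convergence(2)[where h = "\<lambda>s. exp (cc * s) * Hb"])
    show "\<And>n. (\<lambda>s. exp (cc * s) * \<Psi> (xs n) s) integrable_on {t..t+T}"
      by (rule int_exp_h[OF \<Psi>cont[OF xc]])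
    show "(\<lambda>s. exp (cc * s) * Hb) integrable_on {t..t+T}"
      by (rule int_exp_h) simp
    show "norm (exp (cc * s) * \<Psi> (xs n) s) \<le> exp (cc * s) * Hb" for n s
      using \<Psi>B[of n s] by (simp add: abs_mult)
    show "(\<lambda>n. exp (cc * s) * \<Psi> (xs n) s) \<longlonglongrightarrow> exp (cc * s) * \<Psi> x s" for s
      unfolding \<Psi>_def F_def by (intro tendsto_intros conv)
  qed
  have x_eq: "x t = Lop k T (\<Psi> x) t" for t
  proof (rule LIMSEQ_unique[OF LIMSEQ_Suc[OF conv]])
    have "(\<lambda>n. Lop k T (\<Psi> (xs n)) t) \<longlonglongrightarrow> Lop k T (\<Psi> x) t"
      unfolding Lop_def by (intro tendsto_intros intconv)
    then show "(\<lambda>n. xs (Suc n) t) \<longlonglongrightarrow> Lop k T (\<Psi> x) t" unfolding xsS \<Phi>_def .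
  qed
  have xfun: "x = Lop k T (\<Psi> x)" using x_eq by (simp add: fun_eq_iff)
  have D1: "(x has_real_derivative Lop' k T (\<Psi> x) t) (at t)" for t
    by (subst xfun) (rule Lop_deriv(1)[OF k T hc hp])
  have D2: "(Lop' k T (\<Psi> x) has_real_derivative f t * sin (x t) - (1 + q t) * cos (x t)) (at t)" for t
  proof -
    have "(Lop' k T (\<Psi> x) has_real_derivative k^2 * Lop k T (\<Psi> x) t - \<Psi> x t) (at t)"
      by (rule Lop_deriv(2)[OF k T hc hp])
    moreover have "k^2 * Lop k T (\<Psi> x) t - \<Psi> x t = f t * sin (x t) - (1 + q t) * cos (x t)"
      using x_eq[of t] unfolding kM \<Psi>_def F_def by simp
    ultimately show ?thesis by simp
  qed
  show ?thesis using D1 D2 x_per x_l x_u by blast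
qed

lemma Kineq:
  fixes a gv fv Cg Cf :: real
  assumes a0: "0 < a" and aD: "a \<le> 1 / (2 * (1 + Cg + Cf))" and Cg: "Cg \<ge> 0" and Cf: "Cf \<ge> 0"
    and gv: "\<bar>gv\<bar> \<le> Cg" and fv: "\<bar>fv\<bar> \<le> Cf"
  shows "- gv \<ge> fv * sin a - (1 + gv) * cos a"
    and "gv \<le> fv * sin (pi - a) - (1 + gv) * cos (pi - a)"
proof -
  have X: "2 * (1 + Cg + Cf) > 0" using Cg Cf by simp
  have F5: "a * (2 * (1 + Cg + Cf)) \<le> 1" using aD X by (simp add: le_divide_eq)
  have F5': "2 * a + 2 * (Cg * a) + 2 * (Cf * a) \<le> 1" using F5 by (simp add: algebra_simps)
  have "Cg * a \<ge> 0" "Cf * a \<ge> 0" using Cg Cf a0 by simp_all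
  then have a1: "a \<le> 1" using F5' by linarith
  have api: "a \<le> pi" using a1 pi_gt3 by linarith
  define u where "u = 1 - cos a"
  define sa where "sa = sin a"
  have u0: "u \<ge> 0" unfolding u_def by simp
  have ua: "u \<le> a" unfolding u_def using cos_lip[of a 0] a0 by simp
  have s0: "sa \<ge> 0" unfolding sa_def using sin_ge_zero[of a] a0 api by simp
  have sa1: "sa \<le> a" unfolding sa_def using sin_x_le_x[of a] a0 by simp
  have F1: "gv * u \<le> Cg * u" by (rule mult_right_mono[OF _ u0]) (use gv in linarith)
  have F3: "Cg * u \<le> Cg * a" by (rule mult_left_mono[OF ua Cg])
  have F2: "fv * sa \<le> Cf * sa" by (rule mult_right_mono[OF _ s0]) (use fv in linarith)
  have F2': "(- Cf) * sa \<le> fv * sa" by (rule mult_right_mono[OF _ s0]) (use fv in linarith)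
  have F4: "Cf * sa \<le> Cf * a" by (rule mult_left_mono[OF sa1 Cf])
  have E1: "(1 + gv) * cos a - gv - fv * sin a = (1 - u) - gv * u - fv * sa"
    unfolding u_def sa_def by (simp add: algebra_simps)
  have E2: "fv * sin (pi - a) - (1 + gv) * cos (pi - a) - gv = (1 - u) - gv * u + fv * sa"
    unfolding u_def sa_def by (simp add: algebra_simps)
  have E3: "(- Cf) * sa = - (Cf * sa)" by simp
  show "- gv \<ge> fv * sin a - (1 + gv) * cos a"
    using E1 F1 F2 F3 F4 F5' ua a0 by linarith
  show "gv \<le> fv * sin (pi - a) - (1 + gv) * cos (pi - a)"
    using E2 E3 F1 F2' F3 F4 F5' ua a0 by linarith
qed

lemma periodic_shift_const:
  fixes \<Phi> \<phi> :: "real \<Rightarrow> real"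
  assumes d: "\<And>x. (\<Phi> has_real_derivative \<phi> x) (at x)" and p: "periodic_real T \<phi>"
  shows "\<Phi> (t + T) - \<Phi> t = \<Phi> T - \<Phi> 0"
proof -
  have d1: "((\<lambda>t. \<Phi> (t+T)) has_real_derivative \<phi> (x+T)) (at x)" for x
  proof -
    have "((\<lambda>t. t + T) has_real_derivative 1) (at x)" by (auto intro!: derivative_eq_intros)
    from DERIV_chain2[OF d this] show ?thesis by simp
  qed
  have dz: "((\<lambda>t. \<Phi> (t+T) - \<Phi> t) has_real_derivative 0) (at x)" for x
  proof -
    have "((\<lambda>t. \<Phi> (t+T) - \<Phi> t) has_real_derivative \<phi> (x+T) - \<phi> x) (at x)"
      by (rule DERIV_diff[OF d1 d])
    moreover have "\<phi> (x+T) = \<phi> x" using p unfolding periodic_real_def by blast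
    ultimately show ?thesis by simp
  qed
  show ?thesis using deriv_const_all[OF dz, of t 0] by simp
qed

lemma second_antideriv:
  fixes g :: "real \<Rightarrow> real"
  assumes T: "T > 0" and gc: "continuous_on UNIV g" and gp: "periodic_real T g"
    and gi: "integral {0..T} g = 0"
  shows "\<exists>G Gd. (\<forall>t. (G has_real_derivative Gd t) (at t)) \<and> (\<forall>t. (Gd has_real_derivative g t) (at t))
            \<and> periodic_real T G"
proof -
  obtain H where H: "\<And>x. (H has_real_derivative g x) (at x)" using antideriv[OF gc] by blast
  have "H T - H 0 = 0" using integral_by_antideriv[OF H, of 0 T] T gi by simp
  then have Hp: "periodic_real T H" unfolding periodic_real_def
    using periodic_shift_const[OF H gp] by simp
  have Hc: "continuous_on UNIV H" by (rule deriv_cont[OF H])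
  obtain G0 where G0: "\<And>x. (G0 has_real_derivative H x) (at x)" using antideriv[OF Hc] by blast
  define c where "c = G0 T - G0 0"
  have G0s: "G0 (t + T) - G0 t = c" for t unfolding c_def by (rule periodic_shift_const[OF G0 Hp])
  define G where "G = (\<lambda>t. G0 t - (c/T) * t)"
  define Gd where "Gd = (\<lambda>t. H t - c/T)"
  have dG: "(G has_real_derivative Gd t) (at t)" for t
  proof -
    have "((\<lambda>t. (c/T) * t) has_real_derivative c/T * 1) (at t)" by (rule DERIV_cmult[OF DERIV_ident])
    from DERIV_diff[OF G0 this] show ?thesis unfolding G_def Gd_def by simp
  qed
  have dGd: "(Gd has_real_derivative g t) (at t)" for t
    using DERIV_diff[OF H DERIV_const[of "c/T"]] unfolding Gd_def by simp
  have "periodic_real T G" unfolding periodic_real_def G_def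
  proof
    fix t
    have "c / T * (t + T) = c / T * t + c" using T by (simp add: field_simps)
    then show "G0 (t + T) - c / T * (t + T) = G0 t - c / T * t" using G0s[of t] by simp
  qed
  then show ?thesis using dG dGd by blast
qed

theorem theorem3p8:
  fixes f g :: "real \<Rightarrow> real" and T :: real
  assumes "T > 0"
    and "smooth_real f" and "smooth_real g"
    and "periodic_real T f" and "periodic_real T g"
    and "(1 / T) * integral {0..T} g = 0"
  shows "\<exists>lam0::real. \<forall>lam::nat. real lam \<ge> lam0 \<longrightarrow>
           (\<exists>x x' :: real \<Rightarrow> real.
              (\<forall>t. (x has_real_derivative x' t) (at t)) \<and>
              (\<forall>t. (x' has_real_derivative
                      (f t * sin (x t) - (1 + g (real lam * t)) * cos (x t))) (at t)) \<and>
              periodic_real T x \<and>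
              (\<forall>t. 0 < x t \<and> x t < pi))"
proof -
  note T = assms(1) and fp = assms(4) and gp = assms(5)
  have fc: "continuous_on UNIV f" by (rule smooth_cont[OF assms(2)])
  have gc: "continuous_on UNIV g" by (rule smooth_cont[OF assms(3)])
  have gi: "integral {0..T} g = 0" using assms(6) T by simp
  obtain G Gd where dG: "\<And>t. (G has_real_derivative Gd t) (at t)"
    and dGd: "\<And>t. (Gd has_real_derivative g t) (at t)" and Gp: "periodic_real T G"
    using second_antideriv[OF T gc gp gi] by blast
  have Gc: "continuous_on UNIV G" by (rule deriv_cont[OF dG])
  obtain BG where BG: "BG \<ge> 0" "\<And>t. \<bar>G t\<bar> \<le> BG" using periodic_bounded[OF T Gc Gp] by blast
  obtain Cf where Cf: "Cf \<ge> 0" "\<And>t. \<bar>f t\<bar> \<le> Cf" using periodic_bounded[OF T fc fp] by blast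
  obtain Cg where Cg: "Cg \<ge> 0" "\<And>t. \<bar>g t\<bar> \<le> Cg" using periodic_bounded[OF T gc gp] by blast
  define \<delta> where "\<delta> = 1 / (2 * (1 + Cg + Cf))"
  have \<delta>0: "\<delta> > 0" unfolding \<delta>_def using Cf Cg by simp
  have \<delta>1: "\<delta> \<le> 1/2" unfolding \<delta>_def using Cf Cg by (simp add: field_simps)
  show ?thesis
  proof (intro exI[of _ "max 1 (4 * BG / \<delta>)"] allI impI)
    fix lam :: nat
    assume lam: "max 1 (4 * BG / \<delta>) \<le> real lam"
    have L1: "real lam \<ge> 1" using lam by simp
    have L2: "4 * BG / \<delta> \<le> real lam" using lam by simp
    have Lne: "real lam \<noteq> 0" using L1 by simp
    have qc: "continuous_on UNIV (\<lambda>t. g (real lam * t))"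
      by (rule continuous_on_compose2[OF gc]) (auto intro: continuous_intros)
    have shiftL: "real lam * (t + T) = real lam * t + real lam * T" for t by (simp add: algebra_simps)
    have qp: "periodic_real T (\<lambda>t. g (real lam * t))"
      unfolding periodic_real_def shiftL using periodic_nat[OF gp] by simp
    have lin: "((\<lambda>t. real lam * t) has_real_derivative real lam * 1) (at t)" for t
      by (rule DERIV_cmult[OF DERIV_ident])
    have Gch: "((\<lambda>t. G (real lam * t)) has_real_derivative Gd (real lam * t) * (real lam * 1)) (at t)" for t
      by (rule DERIV_chain2[OF dG lin])
    have Gdch: "((\<lambda>t. Gd (real lam * t)) has_real_derivative g (real lam * t) * (real lam * 1)) (at t)" for t
      by (rule DERIV_chain2[OF dGd lin])
    define \<alpha> where "\<alpha> = (\<lambda>t. \<delta>/2 - (1 / (real lam)^2) * G (real lam * t))"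
    define \<alpha>' where "\<alpha>' = (\<lambda>t. 0 - (1 / (real lam)^2) * (Gd (real lam * t) * (real lam * 1)))"
    define \<alpha>2 where "\<alpha>2 = (\<lambda>t. 0 - (1 / (real lam)^2) * (g (real lam * t) * (real lam * 1) * (real lam * 1)))"
    have da: "(\<alpha> has_real_derivative \<alpha>' t) (at t)" for t
      unfolding \<alpha>_def \<alpha>'_def by (rule DERIV_diff[OF DERIV_const DERIV_cmult[OF Gch]])
    have da': "(\<alpha>' has_real_derivative \<alpha>2 t) (at t)" for t
      unfolding \<alpha>'_def \<alpha>2_def by (rule DERIV_diff[OF DERIV_const DERIV_cmult[OF DERIV_cmult_right[OF Gdch]]])
    have a2eq: "\<alpha>2 = (\<lambda>t. - g (real lam * t))" unfolding \<alpha>2_def using Lne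
      by (simp add: fun_eq_iff power2_eq_square)
    define \<beta> where "\<beta> = (\<lambda>t. pi - \<alpha> t)"
    define \<beta>' where "\<beta>' = (\<lambda>t. 0 - \<alpha>' t)"
    define \<beta>2 where "\<beta>2 = (\<lambda>t. 0 - \<alpha>2 t)"
    have db: "(\<beta> has_real_derivative \<beta>' t) (at t)" for t
      unfolding \<beta>_def \<beta>'_def by (rule DERIV_diff[OF DERIV_const da])
    have db': "(\<beta>' has_real_derivative \<beta>2 t) (at t)" for t
      unfolding \<beta>'_def \<beta>2_def by (rule DERIV_diff[OF DERIV_const da'])
    have b2eq: "\<beta>2 = (\<lambda>t. g (real lam * t))" unfolding \<beta>2_def a2eq by simp
    have a2c: "continuous_on UNIV \<alpha>2" unfolding a2eq by (intro continuous_intros qc)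
    have b2c: "continuous_on UNIV \<beta>2" unfolding b2eq by (rule qc)
    have ap: "periodic_real T \<alpha>"
      unfolding periodic_real_def \<alpha>_def shiftL using periodic_nat[OF Gp] by simp
    have bp: "periodic_real T \<beta>" using ap unfolding periodic_real_def \<beta>_def by simp
    have abnd: "\<delta>/4 \<le> \<alpha> t \<and> \<alpha> t \<le> \<delta>" for t
    proof -
      have "\<bar>(1 / (real lam)^2) * G (real lam * t)\<bar> \<le> BG / (real lam)^2"
        using BG(2)[of "real lam * t"] Lne by (simp add: abs_mult divide_right_mono)
      also have "\<dots> \<le> BG / real lam"
      proof (rule divide_left_mono[OF _ BG(1)])
        show "real lam \<le> (real lam)^2" using L1 by (simp add: power2_eq_square)
        show "0 < (real lam)^2 * real lam" using L1 by simp
      qed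
      also have "\<dots> \<le> \<delta>/4"
      proof -
        have "4 * BG \<le> real lam * \<delta>" using L2 \<delta>0 by (simp add: divide_le_eq)
        then show ?thesis using L1 by (simp add: divide_le_eq mult.commute)
      qed
      finally have "\<bar>(1 / (real lam)^2) * G (real lam * t)\<bar> \<le> \<delta>/4" .
      then show ?thesis unfolding \<alpha>_def using \<delta>0 by linarith
    qed
    have \<delta>K: "\<delta> \<le> 1 / (2 * (1 + Cg + Cf))" unfolding \<delta>_def by simp
    have lower: "\<alpha>2 t \<ge> f t * sin (\<alpha> t) - (1 + g (real lam * t)) * cos (\<alpha> t)" for t
    proof -
      have "\<alpha> t > 0" using abnd[of t] \<delta>0 by linarith
      from Kineq(1)[OF this _ Cg(1) Cf(1) Cg(2) Cf(2)] abnd[of t] \<delta>K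
      show ?thesis unfolding a2eq by simp
    qed
    have upper: "\<beta>2 t \<le> f t * sin (\<beta> t) - (1 + g (real lam * t)) * cos (\<beta> t)" for t
    proof -
      have "\<alpha> t > 0" using abnd[of t] \<delta>0 by linarith
      from Kineq(2)[OF this _ Cg(1) Cf(1) Cg(2) Cf(2)] abnd[of t] \<delta>K
      show ?thesis unfolding b2eq \<beta>_def by simp
    qed
    have ab: "\<alpha> t \<le> \<beta> t" for t
      using abnd[of t] \<delta>1 pi_gt3 unfolding \<beta>_def by linarith
    obtain x x' where x1: "\<forall>t. (x has_real_derivative x' t) (at t)"
      and x2: "\<forall>t. (x' has_real_derivative f t * sin (x t) - (1 + g (real lam * t)) * cos (x t)) (at t)"
      and x3: "periodic_real T x" and x4: "\<forall>t. \<alpha> t \<le> x t \<and> x t \<le> \<beta> t"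
      using UL[OF T fc qc fp qp da da' db db' a2c b2c ap bp lower upper ab] by blast
    have "\<forall>t. 0 < x t \<and> x t < pi"
    proof
      fix t
      have "\<alpha> t > 0" using abnd[of t] \<delta>0 by linarith
      then show "0 < x t \<and> x t < pi" using x4[rule_format, of t] unfolding \<beta>_def by linarith
    qed
    then show "\<exists>x x' :: real \<Rightarrow> real.
              (\<forall>t. (x has_real_derivative x' t) (at t)) \<and>
              (\<forall>t. (x' has_real_derivative
                      (f t * sin (x t) - (1 + g (real lam * t)) * cos (x t))) (at t)) \<and>
              periodic_real T x \<and>
              (\<forall>t. 0 < x t \<and> x t < pi)"
      using x1 x2 x3 by blast
  qed
qed

end
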